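(* Let $\Gamma$ be the semigroup associated to an irreducible plane curve singularity, minimally generated by $r_0<\cdots<r_h$, with conductor $c$. If $h\ge 2$, then $h\le \log_2\!\left(\frac{\sqrt{60c+1}+9}{10}\right)$.
   Context: A numerical semigroup is a submonoid of $(\mathbb N,+)$ with finite complement in $\mathbb N$; it has a unique minimal generating system. The conductor is $c=\mathrm F(\Gamma)+1$, where $\mathrm F(\Gamma)$ is the largest integer not in $\Gamma$. $\langle X\rangle$ is the submonoid generated by $X$. For an arrangement $(r_0,\ldots,r_h)$ of the minimal generators, set $d_k=\gcd(r_0,\ldots,r_{k-1})$ and $e_k=d_k/d_{k+1}$. A set $A$ of positive integers with nontrivial partition $A=A_1\cup A_2$ is the gluing of $A_1$ and $A_2$ if $\mathrm{lcm}(\gcd A_1,\gcd A_2)\in\langle A_1\rangle\cap\langle A_2\rangle$. $\Gamma$ is free for $(r_0,\ldots,r_h)$ if $h=0$, or $h\ge1$, $\{r_0,\ldots,r_h\}$ is the gluing of $\{r_0,\ldots,r_{h-1}\}$ and $\{r_h\}$, and $\langle r_0/d_h,\ldots,r_{h-1}/d_h\rangle$ is free for $(r_0/d_h,\ldots,r_{h-1}/d_h)$. $\Gamma$ is telescopic if it is free for the increasing arrangement $r_0<\cdots<r_h$. $\Gamma$ is the semigroup associated to an irreducible plane curve singularity if it is telescopic and $e_kr_k<r_{k+1}$ for all $k=1,\ldots,h-1$. *)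

theory Defs
  imports Complex_Main
begin

inductive_set monoid_gen :: "nat set \<Rightarrow> nat set" for X :: "nat set" where
  zero: "0 \<in> monoid_gen X"
| add: "x \<in> X \<Longrightarrow> y \<in> monoid_gen X \<Longrightarrow> x + y \<in> monoid_gen X"

definition numerical_semigroup :: "nat set \<Rightarrow> bool" where
  "numerical_semigroup S \<longleftrightarrow> 0 \<in> S \<and> (\<forall>x\<in>S. \<forall>y\<in>S. x + y \<in> S) \<and> finite (UNIV - S)"

definition minimally_generated_by :: "nat set \<Rightarrow> (nat \<Rightarrow> nat) \<Rightarrow> nat \<Rightarrow> bool" where
  "minimally_generated_by S r h \<longleftrightarrow>
     S = monoid_gen (r ` {..h}) \<and> (\<forall>i\<le>h. 0 < r i \<and> r i \<notin> monoid_gen (r ` ({..h} - {i})))"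

definition conductor :: "nat set \<Rightarrow> nat" where
  "conductor S = (if S = UNIV then 0 else Max (UNIV - S) + 1)"

definition is_gluing :: "nat set \<Rightarrow> nat set \<Rightarrow> bool" where
  "is_gluing A1 A2 \<longleftrightarrow> A1 \<noteq> {} \<and> A2 \<noteq> {} \<and> A1 \<inter> A2 = {} \<and>
     lcm (Gcd A1) (Gcd A2) \<in> monoid_gen A1 \<inter> monoid_gen A2"

definition dseq :: "(nat \<Rightarrow> nat) \<Rightarrow> nat \<Rightarrow> nat" where
  "dseq r k = Gcd (r ` {..<k})"

definition eseq :: "(nat \<Rightarrow> nat) \<Rightarrow> nat \<Rightarrow> nat" where
  "eseq r k = dseq r k div dseq r (Suc k)"

primrec free_for :: "(nat \<Rightarrow> nat) \<Rightarrow> nat \<Rightarrow> bool" where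
  "free_for r 0 = True"
| "free_for r (Suc h) =
     (is_gluing (r ` {..h}) {r (Suc h)} \<and>
      free_for (\<lambda>i. r i div dseq r (Suc h)) h)"

definition telescopic :: "nat set \<Rightarrow> bool" where
  "telescopic S \<longleftrightarrow> (\<exists>r h. strict_mono_on {..h} r \<and> minimally_generated_by S r h \<and> free_for r h)"

definition plane_curve_semigroup :: "nat set \<Rightarrow> bool" where
  "plane_curve_semigroup S \<longleftrightarrow> numerical_semigroup S \<and>
     (\<exists>r h. strict_mono_on {..h} r \<and> minimally_generated_by S r h \<and> free_for r h \<and>
        (\<forall>k. 1 \<le> k \<and> k \<le> h - 1 \<longrightarrow> eseq r k * r k < r (Suc k)))"

end

theory Submission
  imports Defs
begin

lemma mg_mono: "x \<in> monoid_gen A \<Longrightarrow> A \<subseteq> B \<Longrightarrow> x \<in> monoid_gen B"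
  by (induction rule: monoid_gen.induct) (auto intro: monoid_gen.intros)

lemma mg_add: "x \<in> monoid_gen A \<Longrightarrow> y \<in> monoid_gen A \<Longrightarrow> x + y \<in> monoid_gen A"
  by (induction rule: monoid_gen.induct) (auto simp: add.assoc intro: monoid_gen.intros)

lemma mg_base: "a \<in> A \<Longrightarrow> a \<in> monoid_gen A"
  using monoid_gen.add[OF _ monoid_gen.zero] by simp

lemma mg_mult: "x \<in> monoid_gen A \<Longrightarrow> m * x \<in> monoid_gen A"
  by (induction m) (auto intro: mg_add monoid_gen.zero)

lemma mg_Gcd: "x \<in> monoid_gen A \<Longrightarrow> Gcd A dvd x"
  by (induction rule: monoid_gen.induct) auto

lemma mg_insert: "x \<in> monoid_gen (insert a A) \<Longrightarrow> \<exists>t\<in>monoid_gen A. \<exists>m. x = t + m * a"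
proof (induction rule: monoid_gen.induct)
  case zero
  then show ?case using monoid_gen.zero by force
next
  case (add x y)
  then obtain t m where t: "t \<in> monoid_gen A" "y = t + m * a" by blast
  show ?case
  proof (cases "x = a")
    case True
    then show ?thesis using t by (intro bexI[of _ t] exI[of _ "Suc m"]) auto
  next
    case False
    then have "x \<in> A" using add by auto
    then have "x + t \<in> monoid_gen A" using t monoid_gen.add by blast
    then show ?thesis using t by (intro bexI[of _ "x + t"] exI[of _ m]) auto
  qed
qed

lemma mg_scale: "x \<in> monoid_gen A \<Longrightarrow> c * x \<in> monoid_gen ((*) c ` A)"
  by (induction rule: monoid_gen.induct) (auto simp: distrib_left intro: monoid_gen.intros)

lemma mg_less: "x \<in> monoid_gen A \<Longrightarrow> x < a \<Longrightarrow> x \<in> monoid_gen (A - {a})"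
  by (induction rule: monoid_gen.induct) (auto intro: monoid_gen.intros)

lemma mg_pos: "x \<in> monoid_gen A \<Longrightarrow> x > 0 \<Longrightarrow> \<exists>a\<in>A. \<exists>y\<in>monoid_gen A. x = a + y"
  by (induction rule: monoid_gen.induct) auto

lemma dseq_Suc: "dseq r (Suc k) = gcd (r k) (dseq r k)"
  by (simp add: dseq_def lessThan_Suc)

lemma dseq_0: "dseq r 0 = 0"
  by (simp add: dseq_def)

lemma dseq_dvd_r: "j < k \<Longrightarrow> dseq r k dvd r j"
  by (simp add: dseq_def)

lemma dseq_Suc_dvd: "dseq r (Suc k) dvd dseq r k"
  by (simp add: dseq_Suc)

lemma dseq_1: "dseq r (Suc 0) = r 0"
  by (simp add: dseq_Suc dseq_0)

lemma dseq_pos: "0 < r 0 \<Longrightarrow> 1 \<le> k \<Longrightarrow> 0 < dseq r k"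
proof (induction k)
  case 0 then show ?case by simp
next
  case (Suc k)
  then show ?case by (cases k) (auto simp: dseq_Suc dseq_0)
qed

lemma dseq_scale: "(\<And>i. i < k \<Longrightarrow> r i = D * r' i) \<Longrightarrow> dseq r k = D * dseq r' k"
proof -
  assume a: "\<And>i. i < k \<Longrightarrow> r i = D * r' i"
  have "r ` {..<k} = (*) D ` (r' ` {..<k})" using a by (auto simp: image_image)
  then show ?thesis by (simp add: dseq_def Gcd_mult)
qed

lemma free_glue:
  "free_for r h \<Longrightarrow> (\<forall>i\<le>h. 0 < r i) \<Longrightarrow> 1 \<le> k \<Longrightarrow> k \<le> h
   \<Longrightarrow> eseq r k * r k \<in> monoid_gen (r ` {..<k})"
proof (induction h arbitrary: r k)
  case 0 then show ?case by simp
next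
  case (Suc h)
  define D where "D = dseq r (Suc h)"
  define r' where "r' = (\<lambda>i. r i div D)"
  have glue: "is_gluing (r ` {..h}) {r (Suc h)}" and fr: "free_for r' h"
    using Suc.prems(1) by (simp_all add: D_def r'_def)
  have Dpos: "0 < D" unfolding D_def using Suc.prems(2) by (intro dseq_pos) auto
  have Ddvd: "\<And>i. i \<le> h \<Longrightarrow> D dvd r i" unfolding D_def by (intro dseq_dvd_r) auto
  have req: "\<And>i. i \<le> h \<Longrightarrow> r i = D * r' i" using Ddvd by (simp add: r'_def)
  show ?case
  proof (cases "k = Suc h")
    case True
    have "lcm (Gcd (r ` {..h})) (Gcd {r (Suc h)}) \<in> monoid_gen (r ` {..h})"
      using glue by (simp add: is_gluing_def)
    moreover have "Gcd (r ` {..h}) = D" by (simp add: D_def dseq_def lessThan_Suc_atMost)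
    moreover have "lcm D (r (Suc h)) = eseq r (Suc h) * r (Suc h)"
    proof -
      have "eseq r (Suc h) = D div gcd (r (Suc h)) D"
        by (simp add: eseq_def dseq_Suc D_def)
      moreover have "r (Suc h) * (D div gcd D (r (Suc h))) = r (Suc h) * D div gcd D (r (Suc h))"
        by (rule div_mult_swap) simp
      ultimately show ?thesis
        by (simp add: lcm_nat_def gcd.commute mult.commute)
    qed
    ultimately show ?thesis using True by (simp add: lessThan_Suc_atMost)
  next
    case False
    then have kh: "k \<le> h" using Suc.prems by simp
    have pos': "\<forall>i\<le>h. 0 < r' i" using Suc.prems(2) req Dpos
      by (metis le_SucI mult_0_right neq0_conv)
    have IH: "eseq r' k * r' k \<in> monoid_gen (r' ` {..<k})"
      using Suc.IH[OF fr pos' Suc.prems(3) kh] .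
    have "D * (eseq r' k * r' k) \<in> monoid_gen ((*) D ` (r' ` {..<k}))"
      by (rule mg_scale[OF IH])
    moreover have "(*) D ` (r' ` {..<k}) = r ` {..<k}"
      using req kh by (force simp: image_image)
    moreover have "eseq r k = eseq r' k"
    proof -
      have "dseq r k = D * dseq r' k" using req kh by (intro dseq_scale) auto
      moreover have "dseq r (Suc k) = D * dseq r' (Suc k)" using req kh by (intro dseq_scale) auto
      ultimately show ?thesis using Dpos by (simp add: eseq_def)
    qed
    moreover have "D * r' k = r k" using req kh by simp
    ultimately show ?thesis by (metis mult.left_commute)
  qed
qed

definition Irr :: "nat set \<Rightarrow> nat set" where
  "Irr S = {s\<in>S. 0 < s \<and> \<not> (\<exists>a\<in>S. \<exists>b\<in>S. 0 < a \<and> 0 < b \<and> s = a + b)}"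

lemma gens_irr:
  assumes "minimally_generated_by S r h"
  shows "r ` {..h} = Irr S"
proof
  have S: "S = monoid_gen (r ` {..h})" and mn: "\<forall>i\<le>h. 0 < r i \<and> r i \<notin> monoid_gen (r ` ({..h} - {i}))"
    using assms by (auto simp: minimally_generated_by_def)
  show "r ` {..h} \<subseteq> Irr S"
  proof
    fix x assume "x \<in> r ` {..h}"
    then obtain i where i: "i \<le> h" "x = r i" by auto
    have "x \<in> S" using S i mg_base by auto
    moreover have "0 < x" using mn i by auto
    moreover have "\<not> (\<exists>a\<in>S. \<exists>b\<in>S. 0 < a \<and> 0 < b \<and> x = a + b)"
    proof
      assume "\<exists>a\<in>S. \<exists>b\<in>S. 0 < a \<and> 0 < b \<and> x = a + b"
      then obtain a b where ab: "a \<in> S" "b \<in> S" "0 < a" "0 < b" "x = a + b" by auto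
      have "a \<in> monoid_gen (r ` {..h} - {r i})" using ab S i by (intro mg_less) auto
      moreover have "b \<in> monoid_gen (r ` {..h} - {r i})" using ab S i by (intro mg_less) auto
      ultimately have "x \<in> monoid_gen (r ` {..h} - {r i})" using ab mg_add by auto
      moreover have "r ` {..h} - {r i} \<subseteq> r ` ({..h} - {i})" by auto
      ultimately have "r i \<in> monoid_gen (r ` ({..h} - {i}))" using mg_mono i by auto
      then show False using mn i by auto
    qed
    ultimately show "x \<in> Irr S" by (simp add: Irr_def)
  qed
next
  have S: "S = monoid_gen (r ` {..h})" and mn: "\<forall>i\<le>h. 0 < r i \<and> r i \<notin> monoid_gen (r ` ({..h} - {i}))"
    using assms by (auto simp: minimally_generated_by_def)
  show "Irr S \<subseteq> r ` {..h}"
  proof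
    fix x assume x: "x \<in> Irr S"
    then have "x \<in> monoid_gen (r ` {..h})" "0 < x" using S by (auto simp: Irr_def)
    then obtain a y where ay: "a \<in> r ` {..h}" "y \<in> monoid_gen (r ` {..h})" "x = a + y"
      using mg_pos by blast
    have "0 < a" using ay mn by auto
    have "y = 0"
    proof (rule ccontr)
      assume "y \<noteq> 0"
      moreover have "a \<in> S" using ay S mg_base by auto
      ultimately show False using x ay \<open>0 < a\<close> S by (auto simp: Irr_def)
    qed
    then show "x \<in> r ` {..h}" using ay by simp
  qed
qed

lemma e_ge2:
  assumes "minimally_generated_by S r h" "free_for r h" "1 \<le> k" "k \<le> h"
  shows "2 \<le> eseq r k"
proof -
  have mn: "\<forall>i\<le>h. 0 < r i \<and> r i \<notin> monoid_gen (r ` ({..h} - {i}))"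
    using assms by (auto simp: minimally_generated_by_def)
  have gl: "eseq r k * r k \<in> monoid_gen (r ` {..<k})"
    using free_glue[OF assms(2)] mn assms(3,4) by auto
  have dk: "0 < dseq r k" using mn assms(3) by (intro dseq_pos) auto
  have "dseq r (Suc k) dvd dseq r k" by (rule dseq_Suc_dvd)
  then have de: "dseq r k = eseq r k * dseq r (Suc k)" by (simp add: eseq_def)
  then have "eseq r k \<noteq> 0" using dk by auto
  moreover have "eseq r k \<noteq> 1"
  proof
    assume "eseq r k = 1"
    moreover have "r ` {..<k} \<subseteq> r ` ({..h} - {k})" using assms(4) by auto
    ultimately have "r k \<in> monoid_gen (r ` ({..h} - {k}))" using gl
      by (auto elim!: mg_mono)
    then show False using mn assms(4) by auto
  qed
  ultimately show ?thesis by linarith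
qed

lemma small_dvd_zero:
  fixes x :: int and E :: nat
  assumes "int E dvd x" "\<bar>x\<bar> < int E"
  shows "x = 0"
proof -
  obtain q where q: "x = int E * q" using assms(1) by (auto elim: dvdE)
  show ?thesis
  proof (rule ccontr)
    assume "x \<noteq> 0"
    then have "q \<noteq> 0" using q by auto
    then have "\<bar>q\<bar> \<ge> 1" by linarith
    then have "\<bar>x\<bar> \<ge> int E" using q by (simp add: abs_mult mult_le_cancel_left1)
    then show False using assms(2) by simp
  qed
qed

lemma coprime_step:
  fixes E g rho :: nat and x :: int
  assumes "0 < g" "gcd (g * rho) (E * g) = g" "int (E * g) dvd x * int (g * rho)"
  shows "int E dvd x"
proof -
  have "g * gcd rho E = g" using assms(2) by (simp add: gcd_mult_distrib_nat mult.commute)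
  then have "gcd rho E = 1" using assms(1) by simp
  then have cp: "coprime (int E) (int rho)"
    by (simp add: coprime_int_iff coprime_iff_gcd_eq_1 gcd.commute)
  have "int g * int E dvd int g * (x * int rho)" using assms(3) by (simp add: ac_simps)
  then have "int E dvd x * int rho" using assms(1) by simp
  then show ?thesis using cp by (simp add: coprime_dvd_mult_left_iff)
qed

lemma nonmem:
  assumes pos: "0 < r 0"
    and glue: "\<forall>k. 1 \<le> k \<and> k \<le> h \<longrightarrow> eseq r k * r k \<in> monoid_gen (r ` {..<k})"
  shows "n \<le> h \<Longrightarrow> s \<in> monoid_gen (r ` {..<Suc n}) \<Longrightarrow> (\<forall>j. 1 \<le> j \<and> j < Suc n \<longrightarrow> b j < eseq r j)
    \<Longrightarrow> int s = y * int (r 0) + (\<Sum>j\<in>{1..<Suc n}. int (b j) * int (r j)) \<Longrightarrow> 0 \<le> y"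
proof (induction n arbitrary: s y)
  case 0
  have "Gcd (r ` {..<Suc 0}) dvd s" using 0 mg_Gcd by blast
  then have "r 0 dvd s" by (simp add: lessThan_Suc)
  then obtain q where "s = r 0 * q" by (auto elim: dvdE)
  then have "int (r 0) * int q = y * int (r 0)" using 0 by simp
  then have "y = int q" using pos by simp
  then show ?case by simp
next
  case (Suc n)
  define K where "K = Suc n"
  define E where "E = eseq r K"
  have Kh: "K \<le> h" "1 \<le> K" using Suc.prems K_def by auto
  have "s \<in> monoid_gen (insert (r K) (r ` {..<K}))"
    using Suc.prems(2) by (simp add: K_def lessThan_Suc)
  then obtain t m where tm: "t \<in> monoid_gen (r ` {..<K})" "s = t + m * r K"
    using mg_insert by blast
  have dK: "0 < dseq r K" using pos Kh by (intro dseq_pos) auto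
  have "dseq r (Suc K) dvd dseq r K" by (rule dseq_Suc_dvd)
  then have de: "dseq r K = E * dseq r (Suc K)" by (simp add: eseq_def E_def)
  have gpos: "0 < dseq r (Suc K)" using pos by (intro dseq_pos) auto
  have Epos: "0 < E" using de dK by (cases E) auto
  have gE: "E * r K \<in> monoid_gen (r ` {..<K})" using glue Kh E_def by auto
  define t' where "t' = t + (m div E) * (E * r K)"
  define b' where "b' = m mod E"
  have t'mem: "t' \<in> monoid_gen (r ` {..<K})" unfolding t'_def
    using tm(1) mg_mult[OF gE, of "m div E"] by (rule mg_add)
  have seq: "s = t' + b' * r K"
  proof -
    have "m = (m div E) * E + m mod E" by simp
    then have "m * r K = (m div E) * (E * r K) + b' * r K" unfolding b'_def
      by (metis add_mult_distrib mult.assoc)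
    then show ?thesis using tm by (simp add: t'_def)
  qed
  have b'lt: "b' < E" using Epos by (simp add: b'_def)
  define X where "X = y * int (r 0) + (\<Sum>j\<in>{1..<K}. int (b j) * int (r j))"
  have sumsplit: "{1..<Suc K} = insert K {1..<K}" using Kh by auto
  have s2: "int s = X + int (b K) * int (r K)"
  proof -
    have "(\<Sum>j\<in>{1..<Suc K}. int (b j) * int (r j)) = int (b K) * int (r K) + (\<Sum>j\<in>{1..<K}. int (b j) * int (r j))"
      unfolding sumsplit by (rule sum.insert) auto
    then show ?thesis using Suc.prems(4) unfolding X_def K_def by simp
  qed
  have dX: "int (dseq r K) dvd X" unfolding X_def
  proof (intro dvd_add dvd_mult dvd_sum)
    show "int (dseq r K) dvd int (r 0)" using Kh by (simp add: dseq_dvd_r)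
    fix j assume "j \<in> {1..<K}"
    then show "int (dseq r K) dvd int (r j)" by (simp add: dseq_dvd_r)
  qed
  have dt: "int (dseq r K) dvd int t'"
  proof -
    have "Gcd (r ` {..<K}) dvd t'" using t'mem mg_Gcd by blast
    then show ?thesis by (simp add: dseq_def)
  qed
  have "int t' + int b' * int (r K) = X + int (b K) * int (r K)" using seq s2 by simp
  then have eqx: "(int b' - int (b K)) * int (r K) = X - int t'" by (simp add: algebra_simps)
  then have "int (dseq r K) dvd (int b' - int (b K)) * int (r K)" using dX dt by simp
  moreover have "r K = dseq r (Suc K) * (r K div dseq r (Suc K))"
    by (simp add: dseq_Suc)
  ultimately have "int (E * dseq r (Suc K)) dvd (int b' - int (b K)) * int (dseq r (Suc K) * (r K div dseq r (Suc K)))"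
    using de by metis
  moreover have "gcd (dseq r (Suc K) * (r K div dseq r (Suc K))) (E * dseq r (Suc K)) = dseq r (Suc K)"
    using de \<open>r K = _\<close> by (metis dseq_Suc)
  ultimately have "int E dvd (int b' - int (b K))"
    using coprime_step gpos by blast
  moreover have "\<bar>int b' - int (b K)\<bar> < int E" using b'lt Suc.prems(3) Kh E_def K_def by auto
  ultimately have "int b' - int (b K) = 0" by (rule small_dvd_zero)
  then have "int t' = X" using eqx by simp
  then show ?case using Suc.IH[of t' y] Kh t'mem Suc.prems(3) by (simp add: K_def X_def)
qed

lemma A1:
  fixes e d R q :: int
  assumes "e \<ge> 2" "d > 0" "R = d * q" "q \<ge> e + 1"
  shows "3 * R + d \<ge> 10 * d \<and> 3 * ((e - 1) * R - e * d) \<ge> d * 3"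
proof -
  have h0: "d * q \<ge> d * (e + 1)" using assms by (intro mult_left_mono) auto
  have h1: "d * e \<ge> d * 2" using assms by (intro mult_left_mono) auto
  have g1: "3 * R + d \<ge> 10 * d" using h0 h1 assms(3) by (simp add: algebra_simps)
  have h2: "(e - 1) * R \<ge> (e - 1) * (d * (e + 1))" using h0 assms by (intro mult_left_mono) auto
  have h3: "(e - 1) * (d * (e + 1)) - e * d - d = d * ((e - 2) * (e + 1))" by (simp add: algebra_simps)
  have h4: "d * ((e - 2) * (e + 1)) \<ge> 0" using assms by simp
  have "(e - 1) * R - e * d \<ge> d" using h2 h3 h4 by linarith
  moreover have gen: "d * 3 \<le> 3 * W" if "d \<le> W" for W :: int using that by simp
  ultimately show ?thesis using g1 by blast
qed
lemma A2:
  fixes E a b X Y rk rk1 P :: int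
  assumes "E \<ge> 2" "b > 0" "a = E * b" "X \<ge> 1" "20*X - 18*Y + 1 \<ge> 0"
    "3 * rk + a \<ge> 10 * X * a" "rk \<ge> 0" "rk1 \<ge> 2 * rk + b" "3 * P \<ge> a * (20*X - 18*Y + 1)"
  shows "3 * rk1 + b \<ge> 40 * X * b \<and> 3 * (P + (E - 1) * rk1) \<ge> b * (80*X - 36*Y + 1)"
proof -
  have "E * b \<ge> 2 * b" using assms by (intro mult_right_mono) auto
  then have ab: "a \<ge> 2 * b" using assms by simp
  have 1: "a * (10 * X - 1) \<ge> 2 * b * (10 * X - 1)" using ab assms(4) by (intro mult_right_mono) auto
  have 2: "a * (20*X - 18*Y + 1) \<ge> 2 * b * (20*X - 18*Y + 1)" using ab assms(5) by (intro mult_right_mono) auto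
  have r1: "rk1 \<ge> 0" using assms by simp
  have 3: "(E - 1) * rk1 \<ge> 1 * rk1" using assms(1) r1 by (intro mult_right_mono) auto
  have e1: "a * (10 * X - 1) = 10 * X * a - a" by (simp add: algebra_simps)
  have e2: "2 * b * (10 * X - 1) = 20 * X * b - 2 * b" by (simp add: algebra_simps)
  have g1: "3 * rk1 + b \<ge> 40 * X * b" using 1 e1 e2 assms(6,8) by linarith
  have e3: "2 * b * (20*X - 18*Y + 1) + (40 * X * b - b) = b * (80*X - 36*Y + 1)" by (simp add: algebra_simps)
  have gen: "A + 3 * rk1 \<le> 3 * (P + U)" if "A \<le> 3 * P" "rk1 \<le> U" for A U :: int using that by simp
  have "3 * (P + (E - 1) * rk1) \<ge> a * (20*X - 18*Y + 1) + 3 * rk1" using gen assms(9) 3 by simp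
  then show ?thesis using g1 2 e3 by linarith
qed

definition PP :: "(nat \<Rightarrow> nat) \<Rightarrow> nat \<Rightarrow> int" where
  "PP r k = (\<Sum>j\<in>{1..k}. (int (eseq r j) - 1) * int (r j)) - int (r 0)"

lemma de_int: "int (dseq r k) = int (eseq r k) * int (dseq r (Suc k))"
proof -
  have "dseq r (Suc k) dvd dseq r k" by (rule dseq_Suc_dvd)
  then have "dseq r k = eseq r k * dseq r (Suc k)" by (simp add: eseq_def)
  then show ?thesis by (metis of_nat_mult)
qed

lemma pow_aux: "(0::int) \<le> 20 * 4 ^ m - 18 * 2 ^ m + 1"
proof -
  have e: "(4::int) ^ m = 2 ^ m * 2 ^ m" by (simp flip: power_mult_distrib)
  have y: "(1::int) \<le> 2 ^ m" by simp
  then have "(2::int) ^ m * 2 ^ m \<ge> 1 * 2 ^ m" by (intro mult_right_mono) auto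
  then show ?thesis using e y by linarith
qed

lemma ineq:
  assumes pos: "0 < r 0"
    and e2: "\<forall>k. 1 \<le> k \<and> k \<le> h \<longrightarrow> 2 \<le> eseq r k"
    and r01: "r 0 < r 1"
    and pc: "\<forall>k. 1 \<le> k \<and> k \<le> h - 1 \<longrightarrow> eseq r k * r k < r (Suc k)"
  shows "Suc m \<le> h \<Longrightarrow> 3 * int (r (Suc m)) + int (dseq r (Suc (Suc m))) \<ge> 10 * 4 ^ m * int (dseq r (Suc (Suc m)))
     \<and> 3 * PP r (Suc m) \<ge> int (dseq r (Suc (Suc m))) * (20 * 4 ^ m - 18 * 2 ^ m + 1)"
proof (induction m)
  case 0
  have d2: "0 < dseq r 2" using pos by (intro dseq_pos) auto
  have d1: "int (r 0) = int (eseq r 1) * int (dseq r 2)"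
    using de_int[of r 1] by (simp add: dseq_1 numeral_2_eq_2)
  have "dseq r 2 dvd r 1" by (rule dseq_dvd_r) simp
  then obtain q where q: "r 1 = dseq r 2 * q" by (auto elim: dvdE)
  have a: "int (r 0) < int (r 1)" using r01 by simp
  have b: "int (r 1) = int (dseq r 2) * int q" using q by simp
  have "int (eseq r 1) * int (dseq r 2) < int (dseq r 2) * int q" using a b d1 by linarith
  then have "int (eseq r 1) < int q" using d2 by (simp add: mult.commute)
  then have "int q \<ge> int (eseq r 1) + 1" by simp
  moreover have "int (eseq r 1) \<ge> 2" using e2 0 by auto
  ultimately have "3 * int (r 1) + int (dseq r 2) \<ge> 10 * int (dseq r 2) \<and>
      3 * ((int (eseq r 1) - 1) * int (r 1) - int (eseq r 1) * int (dseq r 2)) \<ge> int (dseq r 2) * 3"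
    using A1[of "int (eseq r 1)" "int (dseq r 2)" "int (r 1)" "int q"] d2 q by simp
  then show ?case using d1 by (simp add: PP_def numeral_2_eq_2)
next
  case (Suc m)
  define k where "k = Suc m"
  have kh: "Suc k \<le> h" using Suc.prems k_def by simp
  have IH: "3 * int (r k) + int (dseq r (Suc k)) \<ge> 10 * 4 ^ m * int (dseq r (Suc k))
     \<and> 3 * PP r k \<ge> int (dseq r (Suc k)) * (20 * 4 ^ m - 18 * 2 ^ m + 1)"
    unfolding k_def by (rule Suc.IH) (use Suc.prems in simp)
  have bpos: "0 < dseq r (Suc (Suc k))" using pos by (intro dseq_pos) auto
  have E: "int (eseq r (Suc k)) \<ge> 2" using e2 kh by auto
  have step: "int (r (Suc k)) \<ge> 2 * int (r k) + int (dseq r (Suc (Suc k)))"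
  proof -
    have lt: "eseq r k * r k < r (Suc k)" using pc kh k_def by auto
    have ek: "2 \<le> eseq r k" using e2 kh k_def by auto
    have "dseq r (Suc (Suc k)) dvd r (Suc k)" by (rule dseq_dvd_r) simp
    moreover have "dseq r (Suc (Suc k)) dvd eseq r k * r k"
      using dvd_trans[OF dseq_Suc_dvd dseq_dvd_r[of k "Suc k" r]] by simp
    ultimately have "dseq r (Suc (Suc k)) dvd r (Suc k) - eseq r k * r k" by (rule dvd_diff_nat)
    moreover have "r (Suc k) - eseq r k * r k > 0" using lt by simp
    ultimately have "dseq r (Suc (Suc k)) \<le> r (Suc k) - eseq r k * r k" by (rule dvd_imp_le)
    moreover have "2 * r k \<le> eseq r k * r k" using ek by simp
    ultimately show ?thesis using lt by linarith
  qed
  have PPs: "PP r (Suc k) = PP r k + (int (eseq r (Suc k)) - 1) * int (r (Suc k))"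
    by (simp add: PP_def)
  have X: "(1::int) \<le> 4 ^ m" by simp
  have c: "3 * int (r (Suc k)) + int (dseq r (Suc (Suc k))) \<ge> 40 * 4 ^ m * int (dseq r (Suc (Suc k)))
    \<and> 3 * (PP r k + (int (eseq r (Suc k)) - 1) * int (r (Suc k))) \<ge> int (dseq r (Suc (Suc k))) * (80 * 4 ^ m - 36 * 2 ^ m + 1)"
    by (rule A2[OF E _ de_int[of r "Suc k"] X pow_aux[of m] _ _ step]) (use IH bpos in auto)
  have p1: "(40::int) * 4 ^ m = 10 * 4 ^ Suc m" by simp
  have p2: "(80::int) * 4 ^ m - 36 * 2 ^ m + 1 = 20 * 4 ^ Suc m - 18 * 2 ^ Suc m + 1" by simp
  have "3 * int (r (Suc k)) + int (dseq r (Suc (Suc k))) \<ge> 10 * 4 ^ Suc m * int (dseq r (Suc (Suc k)))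
     \<and> 3 * PP r (Suc k) \<ge> int (dseq r (Suc (Suc k))) * (20 * 4 ^ Suc m - 18 * 2 ^ Suc m + 1)"
    using c by (simp only: PPs p1[symmetric] p2[symmetric])
  then show ?case by (simp only: k_def)
qed

lemma real_part:
  fixes h c :: nat
  assumes "(5::int) * 4 ^ h - 9 * 2 ^ h + 4 \<le> 3 * int c"
  shows "real h \<le> log 2 ((sqrt (60 * real c + 1) + 9) / 10)"
proof -
  define Y :: real where "Y = 2 ^ h"
  have Y1: "1 \<le> Y" unfolding Y_def by simp
  have "real_of_int (5 * 4 ^ h - 9 * 2 ^ h + 4) \<le> real_of_int (3 * int c)"
    using assms by (simp only: of_int_le_iff)
  moreover have q: "(4::real) ^ h = 2 ^ h * 2 ^ h"
    by (subst power_mult_distrib[symmetric]) simp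
  ultimately have a: "5 * Y * Y - 9 * Y + 4 \<le> 3 * real c"
    unfolding Y_def by (simp add: mult.assoc)
  have "(10 * Y - 9) ^ 2 \<le> 60 * real c + 1"
    using a by (simp add: power2_eq_square algebra_simps)
  then have "10 * Y - 9 \<le> sqrt (60 * real c + 1)" by (rule real_le_rsqrt)
  then have b: "Y \<le> (sqrt (60 * real c + 1) + 9) / 10" by simp
  have "log 2 Y = real h" unfolding Y_def by (simp add: log_nat_power)
  moreover have "log 2 Y \<le> log 2 ((sqrt (60 * real c + 1) + 9) / 10)"
    using b Y1 by (subst log_le_cancel_iff) auto
  ultimately show ?thesis by simp
qed

theorem corollary5p4:
  fixes S :: "nat set" and r :: "nat \<Rightarrow> nat" and h :: nat
  assumes "plane_curve_semigroup S"
    and "strict_mono_on {..h} r"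
    and "minimally_generated_by S r h"
    and "h \<ge> 2"
  shows "real h \<le> log 2 ((sqrt (60 * real (conductor S) + 1) + 9) / 10)"
proof -
  obtain r' h' where sm': "strict_mono_on {..h'} r'" and mg': "minimally_generated_by S r' h'"
    and fr: "free_for r' h'" and pc: "\<forall>k. 1 \<le> k \<and> k \<le> h' - 1 \<longrightarrow> eseq r' k * r' k < r' (Suc k)"
    and ns: "numerical_semigroup S"
    using assms(1) unfolding plane_curve_semigroup_def by blast
  have "r' ` {..h'} = r ` {..h}" using gens_irr[OF mg'] gens_irr[OF assms(3)] by simp
  moreover have "card (r' ` {..h'}) = Suc h'"
    using strict_mono_on_imp_inj_on[OF sm'] by (simp add: card_image)
  moreover have "card (r ` {..h}) = Suc h"
    using strict_mono_on_imp_inj_on[OF assms(2)] by (simp add: card_image)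
  ultimately have hh: "h' = h" by simp
  have S: "S = monoid_gen (r' ` {..h})" and pos: "\<forall>i\<le>h. 0 < r' i"
    using mg' hh by (auto simp: minimally_generated_by_def)
  have glue: "\<forall>k. 1 \<le> k \<and> k \<le> h \<longrightarrow> eseq r' k * r' k \<in> monoid_gen (r' ` {..<k})"
    using free_glue[OF fr] pos hh by auto
  have e2: "\<forall>k. 1 \<le> k \<and> k \<le> h \<longrightarrow> 2 \<le> eseq r' k"
    using e_ge2[OF mg' fr] hh by auto
  have r01: "r' 0 < r' 1" using sm' hh assms(4) by (auto simp: strict_mono_on_def)
  have pc': "\<forall>k. 1 \<le> k \<and> k \<le> h - 1 \<longrightarrow> eseq r' k * r' k < r' (Suc k)" using pc hh by simp
  define m where "m = h - 1"
  have hm: "h = Suc m" using assms(4) m_def by simp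
  have I: "3 * PP r' (Suc m) \<ge> int (dseq r' (Suc (Suc m))) * (20 * 4 ^ m - 18 * 2 ^ m + 1)"
    using ineq[of r' h m] pos e2 r01 pc' hm by auto
  have D1: "1 \<le> int (dseq r' (Suc (Suc m)))"
    using dseq_pos[of r' "Suc (Suc m)"] pos by simp
  have B0: "(0::int) \<le> 20 * 4 ^ m - 18 * 2 ^ m + 1" by (rule pow_aux)
  have "int (dseq r' (Suc (Suc m))) * (20 * 4 ^ m - 18 * 2 ^ m + 1) \<ge> 1 * (20 * 4 ^ m - 18 * 2 ^ m + 1)"
    using D1 B0 by (intro mult_right_mono) auto
  then have I2: "3 * PP r' h \<ge> 20 * 4 ^ m - 18 * 2 ^ m + 1" using I hm by simp
  then have P0: "0 \<le> PP r' h" using B0 by simp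
  define N where "N = nat (PP r' h)"
  have NP: "int N = PP r' h" using P0 N_def by simp
  have "N \<notin> S"
  proof
    assume "N \<in> S"
    then have Nm: "N \<in> monoid_gen (r' ` {..<Suc h})" using S by (simp add: lessThan_Suc_atMost)
    have bl: "\<forall>j. 1 \<le> j \<and> j < Suc h \<longrightarrow> eseq r' j - 1 < eseq r' j" using e2 by auto
    have "(\<Sum>j\<in>{1..<Suc h}. int (eseq r' j - 1) * int (r' j)) = (\<Sum>j\<in>{1..h}. (int (eseq r' j) - 1) * int (r' j))"
    proof (rule sum.cong)
      show "{1..<Suc h} = {1..h}" by auto
    next
      fix j assume "j \<in> {1..h}"
      then have "1 \<le> eseq r' j" using e2 by auto
      then show "int (eseq r' j - 1) * int (r' j) = (int (eseq r' j) - 1) * int (r' j)" by simp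
    qed
    then have "int N = (-1) * int (r' 0) + (\<Sum>j\<in>{1..<Suc h}. int (eseq r' j - 1) * int (r' j))"
      using NP by (simp add: PP_def)
    then have "0 \<le> (-1::int)" using nonmem[of r' h h N "\<lambda>j. eseq r' j - 1" "-1"] pos glue Nm bl by auto
    then show False by simp
  qed
  moreover have fin: "finite (UNIV - S)" using ns by (simp add: numerical_semigroup_def)
  ultimately have "N \<le> Max (UNIV - S)" "S \<noteq> UNIV" by auto
  then have "N + 1 \<le> conductor S" by (simp add: conductor_def)
  then have "3 * PP r' h + 3 \<le> 3 * int (conductor S)" using NP by linarith
  moreover have "(5::int) * 4 ^ h - 9 * 2 ^ h + 4 = 20 * 4 ^ m - 18 * 2 ^ m + 4" using hm by simp
  ultimately have "(5::int) * 4 ^ h - 9 * 2 ^ h + 4 \<le> 3 * int (conductor S)" using I2 by linarith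
  then show ?thesis by (rule real_part)
qed

end
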